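(* Assume $\mathsf{CH}$. There is a $\mathcal{Z}$-MAD family (a MAD family $\mathcal{A}$ with $\mathcal{I}(\mathcal{A})\not\le_K\mathcal{Z}$) that is not Shelah–Stepr\={a}ns for block sequences.
   Context: $\mathcal{Z}=\{A\subseteq\omega:\lim_n|A\cap 2^n|/2^n=0\}$. A MAD family is a maximal family of infinite subsets of $\omega$ with pairwise finite intersections; $\mathcal{I}(\mathcal{A})$ is the ideal generated by $\mathcal{A}$ and finite sets. $\mathcal{I}\le_K\mathcal{J}$ (ideals on $\omega$) means there is $f:\omega\to\omega$ with $f^{-1}(A)\in\mathcal{J}$ for all $A\in\mathcal{I}$. For an ideal $\mathcal{I}$, $(\mathcal{I}^{<\omega})^+$ is the set of $X\subseteq[\omega]^{<\omega}\setminus\{\emptyset\}$ such that every $A\in\mathcal{I}$ is disjoint from some $s\in X$. A block sequence is $\{s_n:n\in\omega\}$ of nonempty finite subsets of $\omega$ with $\max s_n<\min s_{n+1}$. $\mathcal{A}$ is Shelah–Stepr\={a}ns for block sequences if for every block sequence $\{s_n\}\in(\mathcal{I}(\mathcal{A})^{<\omega})^+$ there is an infinite $W\subseteq\omega$ with $\bigcup_{n\in W}s_n\in\mathcal{I}(\mathcal{A})$. *)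

theory Defs
  imports Complex_Main "HOL-Library.Equipollence" "HOL-Library.Countable_Set"
begin

definition CH :: bool where
  "CH \<longleftrightarrow> (\<forall>X :: nat set set. countable X \<or> X \<approx> (UNIV :: nat set set))"

definition Zideal :: "nat set set" where
  "Zideal = {A. (\<lambda>n. real (card (A \<inter> {..<2^n})) / 2^n) \<longlonglongrightarrow> 0}"

definition almost_disjoint_family :: "nat set set \<Rightarrow> bool" where
  "almost_disjoint_family \<A> \<longleftrightarrow>
     (\<forall>X\<in>\<A>. infinite X) \<and> (\<forall>X\<in>\<A>. \<forall>Y\<in>\<A>. X \<noteq> Y \<longrightarrow> finite (X \<inter> Y))"

definition MAD :: "nat set set \<Rightarrow> bool" where
  "MAD \<A> \<longleftrightarrow> almost_disjoint_family \<A> \<and>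
     (\<forall>\<B>. almost_disjoint_family \<B> \<and> \<A> \<subseteq> \<B> \<longrightarrow> \<B> = \<A>)"

definition gen_ideal :: "nat set set \<Rightarrow> nat set set" where
  "gen_ideal \<A> = {X. \<exists>F. finite F \<and> F \<subseteq> \<A> \<and> finite (X - \<Union>F)}"

definition katetov_le :: "nat set set \<Rightarrow> nat set set \<Rightarrow> bool" where
  "katetov_le I J \<longleftrightarrow> (\<exists>f :: nat \<Rightarrow> nat. \<forall>A\<in>I. f -` A \<in> J)"

definition block_sequence :: "(nat \<Rightarrow> nat set) \<Rightarrow> bool" where
  "block_sequence s \<longleftrightarrow> (\<forall>n. finite (s n) \<and> s n \<noteq> {}) \<and> (\<forall>n. Max (s n) < Min (s (Suc n)))"

text \<open>Membership of a family of nonempty finite sets in (I^{<omega})^+.\<close>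
definition fin_positive :: "nat set set \<Rightarrow> nat set set \<Rightarrow> bool" where
  "fin_positive I X \<longleftrightarrow> (\<forall>s\<in>X. finite s \<and> s \<noteq> {}) \<and> (\<forall>A\<in>I. \<exists>s\<in>X. A \<inter> s = {})"

definition SS_block :: "nat set set \<Rightarrow> bool" where
  "SS_block \<A> \<longleftrightarrow> (\<forall>s. block_sequence s \<and> fin_positive (gen_ideal \<A>) (range s) \<longrightarrow>
       (\<exists>W. infinite W \<and> (\<Union>n\<in>W. s n) \<in> gen_ideal \<A>))"

end

theory Submission
  imports Defs
begin


definition lo :: "nat \<Rightarrow> nat" where "lo n = n * n"
definition blk :: "nat \<Rightarrow> nat set" where "blk n = {lo n..<lo (Suc n)}"

lemma lo_strict: "strict_mono lo"
  unfolding strict_mono_def lo_def by (simp add: mult_strict_mono)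

lemma lo_less_iff: "lo a < lo b \<longleftrightarrow> a < b"
  using lo_strict by (simp add: strict_mono_less)

lemma lo_le_iff: "lo a \<le> lo b \<longleftrightarrow> a \<le> b"
  using lo_strict by (simp add: strict_mono_less_eq)

lemma le_lo: "n \<le> lo n"
  unfolding lo_def by (cases n) auto

lemma blk_finite[simp]: "finite (blk n)"
  unfolding blk_def by simp

lemma lo_in_blk: "lo n \<in> blk n"
  unfolding blk_def using lo_less_iff[of n "Suc n"] by simp

lemma blk_ne: "blk n \<noteq> {}" using lo_in_blk by auto

lemma card_blk: "card (blk n) = 2*n+1"
  unfolding blk_def lo_def by simp

lemma in_blk_ge: "x \<in> blk n \<Longrightarrow> n \<le> x"
  unfolding blk_def using le_lo[of n] by auto

lemma blk_disj: "n \<noteq> n' \<Longrightarrow> blk n \<inter> blk n' = {}"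
proof (rule ccontr)
  assume ne: "n \<noteq> n'" and "blk n \<inter> blk n' \<noteq> {}"
  then obtain x where x: "x \<in> blk n" "x \<in> blk n'" by auto
  hence "lo n < lo (Suc n')" "lo n' < lo (Suc n)" unfolding blk_def by auto
  hence "n < Suc n'" "n' < Suc n" using lo_less_iff by blast+
  thus False using ne by simp
qed

lemma blk_lower: "x \<in> blk n \<Longrightarrow> lo (Suc m) \<le> x \<Longrightarrow> m < n"
  unfolding blk_def using lo_less_iff[of "Suc m" "Suc n"] by auto

lemma blk_upper: "x \<in> blk n \<Longrightarrow> x < lo m \<Longrightarrow> n < m"
  unfolding blk_def using lo_less_iff[of n m] by auto

lemma finitely_many_blocks_meet:
  assumes "finite G" shows "finite {n. blk n \<inter> G \<noteq> {}}"
proof -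
  have "{n. blk n \<inter> G \<noteq> {}} \<subseteq> {..Max G}"
  proof
    fix n assume "n \<in> {n. blk n \<inter> G \<noteq> {}}"
    then obtain x where "x \<in> blk n" "x \<in> G" by auto
    thus "n \<in> {..Max G}" using in_blk_ge[of x n] Max_ge[OF assms, of x] by auto
  qed
  thus ?thesis using finite_subset by blast
qed

definition goodF :: "nat set set \<Rightarrow> bool" where
  "goodF F \<longleftrightarrow> (\<forall>X\<in>F. infinite X) \<and> (\<forall>X\<in>F. \<forall>Y\<in>F. X \<noteq> Y \<longrightarrow> finite (X \<inter> Y))
     \<and> infinite {n. blk n \<inter> \<Union>F = {}} \<and> (\<forall>k. \<exists>N. \<forall>n\<ge>N. k \<le> card (blk n - \<Union>F))"

definition invF :: "nat set set \<Rightarrow> bool" where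
  "invF C \<longleftrightarrow> (\<forall>F. finite F \<and> F \<subseteq> C \<longrightarrow> goodF F)"

lemma goodF_empty: "goodF {}"
  unfolding goodF_def
proof (intro conjI allI)
  fix k show "\<exists>N. \<forall>n\<ge>N. k \<le> card (blk n - \<Union> {})"
    by (rule exI[of _ k]) (auto simp: card_blk)
qed auto

lemma invF_AD: "invF C \<Longrightarrow> almost_disjoint_family C"
  unfolding almost_disjoint_family_def
proof (intro conjI ballI impI)
  assume i: "invF C"
  fix X assume "X \<in> C"
  hence "goodF {X}" using i unfolding invF_def by auto
  thus "infinite X" unfolding goodF_def by auto
next
  assume i: "invF C"
  fix X Y assume "X \<in> C" "Y \<in> C" "X \<noteq> Y"
  hence "goodF {X,Y}" using i unfolding invF_def by auto
  thus "finite (X \<inter> Y)" using \<open>X \<noteq> Y\<close> unfolding goodF_def by auto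
qed

lemma invF_chain:
  assumes dir: "\<forall>x\<in>S. \<forall>y\<in>S. fam x \<subseteq> fam y \<or> fam y \<subseteq> fam x"
    and inv: "\<forall>x\<in>S. invF (fam x)"
  shows "invF (\<Union>x\<in>S. fam x)"
  unfolding invF_def
proof (intro allI impI)
  fix F assume F: "finite F \<and> F \<subseteq> (\<Union>x\<in>S. fam x)"
  have "F \<subseteq> (\<Union>x\<in>S. fam x) \<Longrightarrow> F = {} \<or> (\<exists>x\<in>S. F \<subseteq> fam x)"
    using F[THEN conjunct1]
  proof (induction F rule: finite_induct)
    case empty thus ?case by simp
  next
    case (insert a F)
    then obtain y where y: "y \<in> S" "a \<in> fam y" by auto
    from insert have "F = {} \<or> (\<exists>x\<in>S. F \<subseteq> fam x)" by auto
    thus ?case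
    proof
      assume "F = {}" thus ?thesis using y by auto
    next
      assume "\<exists>x\<in>S. F \<subseteq> fam x"
      then obtain x where x: "x \<in> S" "F \<subseteq> fam x" by auto
      from dir x y have "fam x \<subseteq> fam y \<or> fam y \<subseteq> fam x" by auto
      thus ?thesis using x y by blast
    qed
  qed
  hence "F = {} \<or> (\<exists>x\<in>S. F \<subseteq> fam x)" using F by blast
  thus "goodF F"
  proof
    assume "F = {}" thus ?thesis using goodF_empty by simp
  next
    assume "\<exists>x\<in>S. F \<subseteq> fam x"
    then obtain x where "x \<in> S" "F \<subseteq> fam x" by auto
    thus ?thesis using inv F unfolding invF_def by auto
  qed
qed

lemma Z_mono: "B \<in> Zideal \<Longrightarrow> A \<subseteq> B \<Longrightarrow> A \<in> Zideal"
  unfolding Zideal_def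
proof (simp, rule tendsto_sandwich[of "\<lambda>_. 0" _ _ "\<lambda>n. real (card (B \<inter> {..<2^n})) / 2^n"])
  assume "A \<subseteq> B" "(\<lambda>n. real (card (B \<inter> {..<2 ^ n})) / 2 ^ n) \<longlonglongrightarrow> 0"
  show "\<forall>\<^sub>F n in sequentially. 0 \<le> real (card (A \<inter> {..<2 ^ n})) / 2 ^ n" by simp
  show "\<forall>\<^sub>F n in sequentially. real (card (A \<inter> {..<2 ^ n})) / 2 ^ n \<le> real (card (B \<inter> {..<2 ^ n})) / 2 ^ n"
    using \<open>A \<subseteq> B\<close> by (intro always_eventually allI divide_right_mono) (auto intro: card_mono)
qed auto

lemma Z_Un: "A \<in> Zideal \<Longrightarrow> B \<in> Zideal \<Longrightarrow> A \<union> B \<in> Zideal"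
  unfolding Zideal_def
proof (simp, rule tendsto_sandwich[of "\<lambda>_. 0" _ _ "\<lambda>n. real (card (A \<inter> {..<2^n})) / 2^n + real (card (B \<inter> {..<2^n})) / 2^n"])
  assume a: "(\<lambda>n. real (card (A \<inter> {..<2 ^ n})) / 2 ^ n) \<longlonglongrightarrow> 0"
    and b: "(\<lambda>n. real (card (B \<inter> {..<2 ^ n})) / 2 ^ n) \<longlonglongrightarrow> 0"
  show "\<forall>\<^sub>F n in sequentially. 0 \<le> real (card ((A \<union> B) \<inter> {..<2 ^ n})) / 2 ^ n" by simp
  show "\<forall>\<^sub>F n in sequentially. real (card ((A \<union> B) \<inter> {..<2 ^ n})) / 2 ^ n \<le> real (card (A \<inter> {..<2 ^ n})) / 2 ^ n + real (card (B \<inter> {..<2 ^ n})) / 2 ^ n"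
  proof (intro always_eventually allI)
    fix n
    have "card ((A \<union> B) \<inter> {..<(2::nat) ^ n}) \<le> card (A \<inter> {..<2 ^ n}) + card (B \<inter> {..<2 ^ n})"
      by (metis Int_Un_distrib2 card_Un_le)
    hence "real (card ((A \<union> B) \<inter> {..<(2::nat) ^ n})) \<le> real (card (A \<inter> {..<2 ^ n})) + real (card (B \<inter> {..<2 ^ n}))"
      by linarith
    thus "real (card ((A \<union> B) \<inter> {..<2 ^ n})) / 2 ^ n \<le> real (card (A \<inter> {..<2 ^ n})) / 2 ^ n + real (card (B \<inter> {..<2 ^ n})) / 2 ^ n"
      by (simp add: add_divide_distrib[symmetric] divide_right_mono)
  qed
  show "(\<lambda>n. real (card (A \<inter> {..<2 ^ n})) / 2 ^ n + real (card (B \<inter> {..<2 ^ n})) / 2 ^ n) \<longlonglongrightarrow> 0"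
    using tendsto_add[OF a b] by simp
qed auto

lemma Z_empty: "{} \<in> Zideal"
  unfolding Zideal_def by simp

lemma Z_UN: "finite F \<Longrightarrow> (\<forall>A\<in>F. g A \<in> Zideal) \<Longrightarrow> (\<Union>A\<in>F. g A) \<in> Zideal"
  by (induction F rule: finite_induct) (auto intro: Z_Un Z_empty)

lemma Z_not_UNIV_aux: "B \<notin> Zideal \<longleftrightarrow> \<not> ((\<lambda>n. real (card (B \<inter> {..<2^n})) / 2^n) \<longlonglongrightarrow> 0)"
  unfolding Zideal_def by simp



definition nsf :: "(nat \<Rightarrow> nat set) \<Rightarrow> (nat \<Rightarrow> nat \<Rightarrow> bool) \<Rightarrow> nat \<Rightarrow> nat \<Rightarrow> nat" where
  "nsf U Cond k b = (LEAST n. b \<le> n \<and> blk n \<inter> U k = {} \<and> Cond k n)"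

primrec bs :: "(nat \<Rightarrow> nat set) \<Rightarrow> (nat \<Rightarrow> nat \<Rightarrow> bool) \<Rightarrow> (nat \<Rightarrow> nat \<Rightarrow> nat set) \<Rightarrow> nat \<Rightarrow> nat" where
  "bs U Cond pc 0 = 0"
| "bs U Cond pc (Suc k) = Suc (Max (insert (lo (Suc (nsf U Cond k (bs U Cond pc k)))) (pc k (nsf U Cond k (bs U Cond pc k)))))"

lemma window:
  assumes free: "\<And>m. infinite {n. blk n \<inter> U m = {}}"
    and cond: "\<And>k. \<exists>N. \<forall>n\<ge>N. Cond k n"
    and pcfin: "\<And>k n. finite (pc k n)"
    and pclo: "\<And>k n. pc k n \<subseteq> {lo (Suc n)..}"
  shows "\<exists>ns. strict_mono ns \<and> (\<forall>k. blk (ns k) \<inter> U k = {}) \<and> (\<forall>k. Cond k (ns k))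
     \<and> (\<forall>n j. blk n \<inter> pc j (ns j) \<noteq> {} \<longrightarrow> ns j < n \<and> n < ns (Suc j))"
proof -
  define ns where "ns k = nsf U Cond k (bs U Cond pc k)" for k
  have ex: "\<exists>n. b \<le> n \<and> blk n \<inter> U k = {} \<and> Cond k n" for k b
  proof -
    obtain N where N: "\<forall>n\<ge>N. Cond k n" using cond by blast
    obtain n where "n \<ge> max b N" "n \<in> {n. blk n \<inter> U k = {}}"
      using free[of k] unfolding infinite_nat_iff_unbounded_le by blast
    thus ?thesis using N by auto
  qed
  have P: "b \<le> nsf U Cond k b \<and> blk (nsf U Cond k b) \<inter> U k = {} \<and> Cond k (nsf U Cond k b)" for k b
    unfolding nsf_def by (rule LeastI_ex[OF ex])
  have b1: "lo (Suc (ns k)) < bs U Cond pc (Suc k)" for k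
    using Max_ge[of "insert (lo (Suc (ns k))) (pc k (ns k))" "lo (Suc (ns k))"] pcfin
    by (simp add: ns_def less_Suc_eq_le)
  have b2: "x \<in> pc k (ns k) \<Longrightarrow> x < bs U Cond pc (Suc k)" for k x
    using Max_ge[of "insert (lo (Suc (ns k))) (pc k (ns k))" x] pcfin
    by (simp add: ns_def less_Suc_eq_le)
  have nsge: "bs U Cond pc k \<le> ns k" for k using P unfolding ns_def by blast
  have sm: "strict_mono ns"
    unfolding strict_mono_Suc_iff
  proof
    fix k
    have "ns k < lo (Suc (ns k))" using le_lo[of "Suc (ns k)"] by simp
    thus "ns k < ns (Suc k)" using b1[of k] nsge[of "Suc k"] by simp
  qed
  have win: "blk n \<inter> pc j (ns j) \<noteq> {} \<longrightarrow> ns j < n \<and> n < ns (Suc j)" for n j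
  proof
    assume "blk n \<inter> pc j (ns j) \<noteq> {}"
    then obtain x where x: "x \<in> blk n" "x \<in> pc j (ns j)" by auto
    have "ns j < n" using blk_lower[OF x(1)] pclo x(2) by blast
    moreover have "x < lo (ns (Suc j))" using b2[OF x(2)] nsge[of "Suc j"] le_lo[of "ns (Suc j)"] by simp
    hence "n < ns (Suc j)" using blk_upper[OF x(1)] by blast
    ultimately show "ns j < n \<and> n < ns (Suc j)" by simp
  qed
  show ?thesis
    by (rule exI[of _ ns]) (use sm P win in \<open>auto simp: ns_def\<close>)
qed

lemma window_unique:
  fixes ns :: "nat \<Rightarrow> nat"
  assumes sm: "strict_mono ns"
    and "ns j < n \<and> n < ns (Suc j)" "ns j' < n \<and> n < ns (Suc j')"
  shows "j = j'"
proof (rule ccontr)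
  assume "j \<noteq> j'"
  then consider "Suc j \<le> j'" | "Suc j' \<le> j" by linarith
  thus False
  proof cases
    case 1 hence "ns (Suc j) \<le> ns j'" using sm by (simp add: strict_mono_less_eq)
    moreover have "ns j' < n" "n < ns (Suc j)" "ns j < n" "n < ns (Suc j')" using assms(2,3) by auto
    ultimately show False by linarith
  next
    case 2 hence "ns (Suc j') \<le> ns j" using sm by (simp add: strict_mono_less_eq)
    moreover have "ns j' < n" "n < ns (Suc j)" "ns j < n" "n < ns (Suc j')" using assms(2,3) by auto
    ultimately show False by linarith
  qed
qed

lemma window_free:
  fixes ns :: "nat \<Rightarrow> nat"
  assumes sm: "strict_mono ns"
    and win: "\<forall>n j. blk n \<inter> pc j (ns j) \<noteq> {} \<longrightarrow> ns j < n \<and> n < ns (Suc j)"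
  shows "blk (ns k) \<inter> (\<Union>j. pc j (ns j)) = {}"
proof (rule ccontr)
  assume "blk (ns k) \<inter> (\<Union>j. pc j (ns j)) \<noteq> {}"
  then obtain j where "blk (ns k) \<inter> pc j (ns j) \<noteq> {}" by auto
  hence "ns j < ns k" "ns k < ns (Suc j)" using win by auto
  hence "j < k" "k < Suc j" using sm by (simp_all add: strict_mono_less)
  thus False by simp
qed



lemma struct_P:
  fixes ns :: "nat \<Rightarrow> nat"
  assumes sm: "strict_mono ns"
    and win: "\<forall>n j. blk n \<inter> pc j (ns j) \<noteq> {} \<longrightarrow> ns j < n \<and> n < ns (Suc j)"
    and fr: "\<forall>k. blk (ns k) \<inter> U k = {}"
    and Um: "\<And>i j. i \<le> j \<Longrightarrow> U i \<subseteq> U j"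
  shows "infinite {n. blk n \<inter> ((\<Union>j. pc j (ns j)) \<union> U m) = {}}"
proof -
  have "ns ` {m..} \<subseteq> {n. blk n \<inter> ((\<Union>j. pc j (ns j)) \<union> U m) = {}}"
  proof
    fix n assume "n \<in> ns ` {m..}"
    then obtain k where k: "k \<ge> m" "n = ns k" by auto
    have "blk (ns k) \<inter> U m = {}" using fr Um[OF k(1)] by blast
    thus "n \<in> {n. blk n \<inter> ((\<Union>j. pc j (ns j)) \<union> U m) = {}}"
      using window_free[where pc=pc, OF sm win, of k] k by auto
  qed
  moreover have "infinite (ns ` {m..})"
    using sm infinite_Ici[of m] by (simp add: finite_image_iff strict_mono_imp_inj_on)
  ultimately show ?thesis using infinite_super by blast
qed

lemma struct_fin:
  fixes ns :: "nat \<Rightarrow> nat"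
  assumes dis: "\<forall>k. pc k (ns k) \<inter> U k = {}"
    and fin: "\<forall>k. finite (pc k (ns k))"
    and Um: "\<And>i j. i \<le> j \<Longrightarrow> U i \<subseteq> U j"
  shows "finite ((\<Union>j. pc j (ns j)) \<inter> U i)"
proof -
  have "(\<Union>j. pc j (ns j)) \<inter> U i \<subseteq> (\<Union>j<i. pc j (ns j))"
  proof
    fix x assume "x \<in> (\<Union>j. pc j (ns j)) \<inter> U i"
    then obtain j where j: "x \<in> pc j (ns j)" "x \<in> U i" by auto
    have "j < i"
    proof (rule ccontr)
      assume "\<not> j < i" hence "U i \<subseteq> U j" using Um by simp
      thus False using j dis by blast
    qed
    thus "x \<in> (\<Union>j<i. pc j (ns j))" using j by auto
  qed
  thus ?thesis using fin by (meson finite_UN_I finite_lessThan finite_subset)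
qed

lemma struct_inf:
  assumes sm: "strict_mono (ns :: nat \<Rightarrow> nat)"
    and ne: "\<forall>k. pc k (ns k) \<noteq> {}"
    and lo: "\<forall>k. pc k (ns k) \<subseteq> {lo (Suc (ns k))..}"
  shows "infinite (\<Union>j. pc j (ns j))"
  unfolding infinite_nat_iff_unbounded_le
proof
  fix m
  obtain x where x: "x \<in> pc m (ns m)" using ne by blast
  have "m \<le> ns m" using sm by (simp add: seq_suble)
  also have "ns m \<le> lo (Suc (ns m))" using le_lo[of "Suc (ns m)"] by simp
  also have "\<dots> \<le> x" using lo x by auto
  finally show "\<exists>n\<ge>m. n \<in> (\<Union>j. pc j (ns j))" using x by auto
qed

lemma E1core:
  fixes U :: "nat \<Rightarrow> nat set"
  assumes Um: "\<And>i j. i \<le> j \<Longrightarrow> U i \<subseteq> U j"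
    and free: "\<And>m. infinite {n. blk n \<inter> U m = {}}"
    and grow: "\<And>m k. \<exists>N. \<forall>n\<ge>N. k \<le> card (blk n - U m)"
    and X: "\<And>k. infinite (X - U k)"
  shows "\<exists>Y \<subseteq> X. infinite Y \<and> (\<forall>i. finite (Y \<inter> U i)) \<and> (\<forall>m. infinite {n. blk n \<inter> (Y \<union> U m) = {}})
     \<and> (\<forall>m k. \<exists>N. \<forall>n\<ge>N. k \<le> card (blk n - (Y \<union> U m)))"
proof -
  define pt where "pt k n = (SOME x. x \<in> X - U k \<and> lo (Suc n) \<le> x)" for k n
  have pt: "pt k n \<in> X - U k \<and> lo (Suc n) \<le> pt k n" for k n
  proof -
    have "\<exists>x. x \<in> X - U k \<and> lo (Suc n) \<le> x"
      using X[of k] unfolding infinite_nat_iff_unbounded_le by blast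
    thus ?thesis unfolding pt_def by (rule someI_ex)
  qed
  define pc where "pc k n = {pt k n}" for k n
  obtain ns where sm: "strict_mono ns" and fr: "\<forall>k. blk (ns k) \<inter> U k = {}"
    and win: "\<forall>n j. blk n \<inter> pc j (ns j) \<noteq> {} \<longrightarrow> ns j < n \<and> n < ns (Suc j)"
    using window[of U "\<lambda>_ _. True" pc] free pt by (auto simp: pc_def)
  define Y where "Y = (\<Union>j. pc j (ns j))"
  have "Y \<subseteq> X" using pt by (auto simp: Y_def pc_def)
  moreover have "infinite Y" unfolding Y_def
    by (rule struct_inf[OF sm]) (use pt in \<open>auto simp: pc_def\<close>)
  moreover have "\<forall>i. finite (Y \<inter> U i)" unfolding Y_def
    by (intro allI struct_fin Um) (use pt in \<open>auto simp: pc_def\<close>)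
  moreover have "\<forall>m. infinite {n. blk n \<inter> (Y \<union> U m) = {}}"
    unfolding Y_def using struct_P[where pc=pc and U=U, OF sm win fr Um] by blast
  moreover have "\<forall>m k. \<exists>N. \<forall>n\<ge>N. k \<le> card (blk n - (Y \<union> U m))"
  proof (intro allI)
    fix m k
    obtain N where N: "\<forall>n\<ge>N. k + 1 \<le> card (blk n - U m)" using grow by blast
    have "k \<le> card (blk n - (Y \<union> U m))" if "n \<ge> N" for n
    proof -
      have c1: "card (blk n \<inter> Y) \<le> 1"
      proof (cases "blk n \<inter> Y = {}")
        case True thus ?thesis by simp
      next
        case False
        then obtain j where j: "pt j (ns j) \<in> blk n" by (auto simp: Y_def pc_def)
        have "blk n \<inter> Y \<subseteq> {pt j (ns j)}"
        proof
          fix z assume "z \<in> blk n \<inter> Y"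
          then obtain j' where j': "z = pt j' (ns j')" "z \<in> blk n" by (auto simp: Y_def pc_def)
          have "ns j < n \<and> n < ns (Suc j)" using win j by (auto simp: pc_def)
          moreover have "ns j' < n \<and> n < ns (Suc j')" using win j' by (auto simp: pc_def)
          ultimately have "j = j'" using window_unique[OF sm] by blast
          thus "z \<in> {pt j (ns j)}" using j' by simp
        qed
        thus ?thesis using card_mono[of "{pt j (ns j)}"] by fastforce
      qed
      have "blk n - (Y \<union> U m) = (blk n - U m) - (blk n \<inter> Y)" by blast
      hence "card (blk n - U m) - card (blk n \<inter> Y) \<le> card (blk n - (Y \<union> U m))"
        using diff_card_le_card_Diff[of "blk n \<inter> Y" "blk n - U m"] by simp
      moreover have "k + 1 \<le> card (blk n - U m)" using N that by blast
      ultimately show ?thesis using c1 by linarith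
    qed
    thus "\<exists>N. \<forall>n\<ge>N. k \<le> card (blk n - (Y \<union> U m))" by blast
  qed
  ultimately show ?thesis by blast
qed



definition goodpiece :: "(nat \<Rightarrow> nat) \<Rightarrow> (nat \<Rightarrow> nat set) \<Rightarrow> nat \<Rightarrow> nat \<Rightarrow> nat set \<Rightarrow> bool" where
  "goodpiece f U k n0 a \<longleftrightarrow> finite a \<and> a \<subseteq> {lo (Suc n0)..} \<and> a \<inter> U k = {}
     \<and> (\<forall>n. blk n \<inter> a \<noteq> {} \<longrightarrow> k \<le> card (blk n - (a \<union> U k)))
     \<and> (\<exists>N\<ge>k. 3 * 2^N \<le> 8 * card (f -` a \<inter> {..<2^N}))"

lemma piece_exists:
  fixes f :: "nat \<Rightarrow> nat"
  assumes cond: "\<forall>n\<ge>n0. 2*k \<le> card (blk n - U k)"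
    and fU: "f -` U k \<in> Zideal"
    and nh: "\<And>G. finite G \<Longrightarrow> f -` G \<in> Zideal"
  shows "\<exists>a. goodpiece f U k n0 a"
proof -
  define L where "L = lo (Suc n0)"
  define W where "W = {..<L} \<union> U k"
  have "f -` W \<in> Zideal" unfolding W_def vimage_Un by (rule Z_Un[OF nh fU]) simp
  hence lim: "(\<lambda>n. real (card (f -` W \<inter> {..<2^n})) / 2^n) \<longlonglongrightarrow> 0" unfolding Zideal_def by simp
  have "\<forall>\<^sub>F n in sequentially. real (card (f -` W \<inter> {..<2^n})) / 2^n < 1/4"
    by (rule order_tendstoD(2)[OF lim]) simp
  then obtain M where M: "\<forall>n\<ge>M. real (card (f -` W \<inter> {..<2^n})) / 2^n < 1/4"
    unfolding eventually_sequentially by blast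
  define N where "N = max M k"
  define S where "S = {..<(2::nat)^N}"
  have "real (card (f -` W \<inter> S)) / 2^N < 1/4" using M unfolding N_def S_def by simp
  hence "real (card (f -` W \<inter> S)) * 4 < 2^N" by (simp add: divide_less_eq)
  hence "real (4 * card (f -` W \<inter> S)) < real (2^N)" by simp
  hence h1: "4 * card (f -` W \<inter> S) < 2^N" by (simp only: of_nat_less_iff)
  define V where "V = - W"
  have cS: "card S = 2^N" unfolding S_def by simp
  have "f -` V \<inter> S = S - (f -` W \<inter> S)" unfolding V_def by blast
  hence "card (f -` V \<inter> S) = 2^N - card (f -` W \<inter> S)"
    using cS by (simp add: card_Diff_subset S_def)
  hence h2: "3 * 2^N < 4 * card (f -` V \<inter> S)" using h1 by linarith
  define P where "P n = (SOME P. P \<subseteq> blk n - U k \<and> card P = k)" for n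
  have P: "P n \<subseteq> blk n - U k \<and> card (P n) = k" if "n \<ge> n0" for n
  proof -
    have "k \<le> card (blk n - U k)" using cond that by fastforce
    then obtain T where "T \<subseteq> blk n - U k" "card T = k" by (rule obtain_subset_with_card_n)
    thus ?thesis using someI[of "\<lambda>P. P \<subseteq> blk n - U k \<and> card P = k" T] unfolding P_def by blast
  qed
  define H where "H = (\<Union>n\<in>{Suc n0..}. P n)"
  define D where "D = f ` S \<inter> V"
  define a1 where "a1 = D \<inter> H"
  define a2 where "a2 = D - H"
  have Dlo: "x \<in> D \<Longrightarrow> x \<in> blk n \<Longrightarrow> n0 < n" for x n
    using blk_lower[of x n n0] unfolding D_def V_def W_def L_def by force
  have common: "finite a \<and> a \<subseteq> {lo (Suc n0)..} \<and> a \<inter> U k = {}" if "a \<subseteq> D" for a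
    using that unfolding D_def V_def W_def L_def S_def by (auto intro: finite_subset)
  have q1: "\<forall>n. blk n \<inter> a1 \<noteq> {} \<longrightarrow> k \<le> card (blk n - (a1 \<union> U k))"
  proof (intro allI impI)
    fix n assume "blk n \<inter> a1 \<noteq> {}"
    then obtain x where "x \<in> blk n" "x \<in> D" unfolding a1_def by auto
    hence n: "n0 < n" using Dlo by blast
    have Pn: "P n \<subseteq> blk n - U k" "card (P n) = k" using P[of n] n by auto
    have sub: "(blk n - U k) - P n \<subseteq> blk n - (a1 \<union> U k)"
    proof
      fix y assume y: "y \<in> (blk n - U k) - P n"
      have "y \<notin> a1"
      proof
        assume "y \<in> a1"
        then obtain n' where n': "n' \<ge> Suc n0" "y \<in> P n'" unfolding a1_def H_def by auto
        hence "y \<in> blk n'" using P[of n'] by auto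
        hence "n = n'" using blk_disj[of n n'] y by blast
        thus False using y n' by simp
      qed
      thus "y \<in> blk n - (a1 \<union> U k)" using y by simp
    qed
    have "card ((blk n - U k) - P n) = card (blk n - U k) - k"
      using Pn by (simp add: card_Diff_subset finite_subset[OF Pn(1)])
    moreover have "2*k \<le> card (blk n - U k)" using cond n by simp
    ultimately have "k \<le> card ((blk n - U k) - P n)" by simp
    also have "\<dots> \<le> card (blk n - (a1 \<union> U k))" by (rule card_mono[OF _ sub]) simp
    finally show "k \<le> card (blk n - (a1 \<union> U k))" .
  qed
  have q2: "\<forall>n. blk n \<inter> a2 \<noteq> {} \<longrightarrow> k \<le> card (blk n - (a2 \<union> U k))"
  proof (intro allI impI)
    fix n assume "blk n \<inter> a2 \<noteq> {}"
    then obtain x where "x \<in> blk n" "x \<in> D" unfolding a2_def by auto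
    hence n: "n0 < n" using Dlo by blast
    have Pn: "P n \<subseteq> blk n - U k" "card (P n) = k" using P[of n] n by auto
    have sub: "P n \<subseteq> blk n - (a2 \<union> U k)"
      using Pn n unfolding a2_def H_def by auto
    have "k \<le> card (P n)" using Pn by simp
    also have "\<dots> \<le> card (blk n - (a2 \<union> U k))" by (rule card_mono[OF _ sub]) simp
    finally show "k \<le> card (blk n - (a2 \<union> U k))" .
  qed
  have split: "f -` V \<inter> S = (f -` a1 \<inter> S) \<union> (f -` a2 \<inter> S)"
    unfolding a1_def a2_def D_def by blast
  have "card (f -` V \<inter> S) = card (f -` a1 \<inter> S) + card (f -` a2 \<inter> S)"
    unfolding split by (rule card_Un_disjoint) (auto simp: S_def a1_def a2_def)
  hence "3 * 2^N \<le> 8 * card (f -` a1 \<inter> S) \<or> 3 * 2^N \<le> 8 * card (f -` a2 \<inter> S)"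
    using h2 by linarith
  moreover have "k \<le> N" unfolding N_def by simp
  moreover have "a1 \<subseteq> D" "a2 \<subseteq> D" unfolding a1_def a2_def by auto
  ultimately have "goodpiece f U k n0 a1 \<or> goodpiece f U k n0 a2"
    using common[of a1] common[of a2] q1 q2 unfolding goodpiece_def S_def by blast
  thus ?thesis by blast
qed

lemma E2core:
  fixes U :: "nat \<Rightarrow> nat set" and f :: "nat \<Rightarrow> nat"
  assumes Um: "\<And>i j. i \<le> j \<Longrightarrow> U i \<subseteq> U j"
    and free: "\<And>m. infinite {n. blk n \<inter> U m = {}}"
    and grow: "\<And>m k. \<exists>N. \<forall>n\<ge>N. k \<le> card (blk n - U m)"
    and fU: "\<And>k. f -` U k \<in> Zideal"
    and nh: "\<And>G. finite G \<Longrightarrow> f -` G \<in> Zideal"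
  shows "\<exists>A. f -` A \<notin> Zideal \<and> infinite A \<and> (\<forall>i. finite (A \<inter> U i)) \<and> (\<forall>m. infinite {n. blk n \<inter> (A \<union> U m) = {}})
     \<and> (\<forall>m k. \<exists>N. \<forall>n\<ge>N. k \<le> card (blk n - (A \<union> U m)))"
proof -
  define Cond where "Cond k n = (\<forall>n'\<ge>n. 2*k \<le> card (blk n' - U k))" for k n
  define pc where "pc k n = (if Cond k n then SOME a. goodpiece f U k n a else {})" for k n
  have gp: "Cond k n \<Longrightarrow> goodpiece f U k n (pc k n)" for k n
    unfolding pc_def using piece_exists[OF _ fU nh, of n k] someI_ex[of "goodpiece f U k n"]
    by (simp add: Cond_def)
  have pcfin: "finite (pc k n)" for k n
    using gp[of k n] by (cases "Cond k n") (auto simp: goodpiece_def pc_def)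
  have pclo: "pc k n \<subseteq> {lo (Suc n)..}" for k n
    using gp[of k n] by (cases "Cond k n") (auto simp: goodpiece_def pc_def)
  have cond: "\<exists>N. \<forall>n\<ge>N. Cond k n" for k
  proof -
    obtain N where "\<forall>n\<ge>N. 2*k \<le> card (blk n - U k)" using grow by blast
    thus ?thesis unfolding Cond_def by (meson le_trans)
  qed
  obtain ns where sm: "strict_mono ns" and fr: "\<forall>k. blk (ns k) \<inter> U k = {}" and cd: "\<forall>k. Cond k (ns k)"
    and win: "\<forall>n j. blk n \<inter> pc j (ns j) \<noteq> {} \<longrightarrow> ns j < n \<and> n < ns (Suc j)"
    using window[of U Cond pc, OF free cond pcfin pclo] by blast
  have g: "goodpiece f U j (ns j) (pc j (ns j))" for j using gp cd by blast
  define A where "A = (\<Union>j. pc j (ns j))"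
  have notZ: "f -` A \<notin> Zideal"
  proof
    assume "f -` A \<in> Zideal"
    hence lim: "(\<lambda>n. real (card (f -` A \<inter> {..<2^n})) / 2^n) \<longlonglongrightarrow> 0" unfolding Zideal_def by simp
    have "\<forall>\<^sub>F n in sequentially. real (card (f -` A \<inter> {..<2^n})) / 2^n < 3/8"
      by (rule order_tendstoD(2)[OF lim]) simp
    then obtain M where M: "\<forall>n\<ge>M. real (card (f -` A \<inter> {..<2^n})) / 2^n < 3/8"
      unfolding eventually_sequentially by blast
    obtain N where N: "N \<ge> M" "3 * 2^N \<le> 8 * card (f -` pc M (ns M) \<inter> {..<2^N})"
      using g[of M] unfolding goodpiece_def by blast
    have "card (f -` pc M (ns M) \<inter> {..<2^N}) \<le> card (f -` A \<inter> {..<(2::nat)^N})"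
      by (rule card_mono) (auto simp: A_def)
    hence "3 * 2^N \<le> 8 * card (f -` A \<inter> {..<(2::nat)^N})" using N by linarith
    hence "real (3 * 2^N) \<le> real (8 * card (f -` A \<inter> {..<(2::nat)^N}))" by linarith
    hence "3/8 \<le> real (card (f -` A \<inter> {..<2^N})) / 2^N"
      by (simp add: field_simps)
    thus False using M N by force
  qed
  have "infinite A" using notZ nh by blast
  moreover have "\<forall>i. finite (A \<inter> U i)" unfolding A_def
    by (intro allI struct_fin Um) (use g pcfin in \<open>auto simp: goodpiece_def\<close>)
  moreover have "\<forall>m. infinite {n. blk n \<inter> (A \<union> U m) = {}}"
    unfolding A_def using struct_P[where pc=pc and U=U, OF sm win fr Um] by blast
  moreover have "\<forall>m k. \<exists>N. \<forall>n\<ge>N. k \<le> card (blk n - (A \<union> U m))"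
  proof (intro allI)
    fix m k0 :: nat
    define K where "K = max m k0"
    obtain N0 where N0: "\<forall>n\<ge>N0. k0 \<le> card (blk n - U m)" using grow by blast
    have "k0 \<le> card (blk n - (A \<union> U m))" if n: "n \<ge> max N0 (Suc (ns K))" for n
    proof (cases "blk n \<inter> A = {}")
      case True
      hence "blk n - (A \<union> U m) = blk n - U m" by blast
      thus ?thesis using N0 n by simp
    next
      case False
      then obtain j where j: "blk n \<inter> pc j (ns j) \<noteq> {}" unfolding A_def by blast
      hence w: "ns j < n \<and> n < ns (Suc j)" using win by blast
      have "K \<le> j"
      proof (rule ccontr)
        assume "\<not> K \<le> j" hence "Suc j \<le> K" by simp
        hence "ns (Suc j) \<le> ns K" using sm by (simp add: strict_mono_less_eq)
        thus False using w n by simp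
      qed
      have sub: "blk n - (pc j (ns j) \<union> U j) \<subseteq> blk n - (A \<union> U m)"
      proof
        fix y assume y: "y \<in> blk n - (pc j (ns j) \<union> U j)"
        have "U m \<subseteq> U j" using Um \<open>K \<le> j\<close> K_def by simp
        moreover have "y \<notin> A"
        proof
          assume "y \<in> A"
          then obtain j' where j': "y \<in> pc j' (ns j')" unfolding A_def by blast
          hence "blk n \<inter> pc j' (ns j') \<noteq> {}" using y by blast
          hence "ns j' < n \<and> n < ns (Suc j')" using win by blast
          hence "j = j'" using window_unique[OF sm w] by blast
          thus False using y j' by simp
        qed
        ultimately show "y \<in> blk n - (A \<union> U m)" using y by blast
      qed
      have "k0 \<le> j" using \<open>K \<le> j\<close> K_def by simp
      also have "j \<le> card (blk n - (pc j (ns j) \<union> U j))"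
        using g[of j] j unfolding goodpiece_def by blast
      also have "\<dots> \<le> card (blk n - (A \<union> U m))" by (rule card_mono[OF _ sub]) simp
      finally show ?thesis .
    qed
    thus "\<exists>N. \<forall>n\<ge>N. k0 \<le> card (blk n - (A \<union> U m))" by blast
  qed
  ultimately show ?thesis using notZ by blast
qed



definition Useq :: "nat set set \<Rightarrow> nat \<Rightarrow> nat set" where
  "Useq C m = (if C = {} then {} else \<Union> (from_nat_into C ` {..m}))"

lemma Useq_eq: "\<exists>F. finite F \<and> F \<subseteq> C \<and> Useq C m = \<Union>F"
proof (cases "C = {}")
  case True thus ?thesis by (auto simp: Useq_def)
next
  case False
  thus ?thesis using from_nat_into[OF False] by (intro exI[of _ "from_nat_into C ` {..m}"]) (auto simp: Useq_def)
qed

lemma Useq_mono: "i \<le> j \<Longrightarrow> Useq C i \<subseteq> Useq C j"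
  unfolding Useq_def by auto

lemma Useq_free: "invF C \<Longrightarrow> infinite {n. blk n \<inter> Useq C m = {}}"
  using Useq_eq[of C m] unfolding invF_def goodF_def by auto

lemma Useq_grow: "invF C \<Longrightarrow> \<exists>N. \<forall>n\<ge>N. k \<le> card (blk n - Useq C m)"
  using Useq_eq[of C m] unfolding invF_def goodF_def by metis

lemma Useq_cover: "countable C \<Longrightarrow> A \<in> C \<Longrightarrow> A \<subseteq> Useq C (to_nat_on C A)"
  unfolding Useq_def by (auto intro!: exI[of _ "to_nat_on C A"])

lemma Useq_cover_fin:
  assumes "countable C" "finite F" "F \<subseteq> C" shows "\<exists>m. \<Union>F \<subseteq> Useq C m"
  using assms(2,3)
proof (induction F rule: finite_induct)
  case empty thus ?case by simp
next
  case (insert A F)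
  then obtain m where m: "\<Union>F \<subseteq> Useq C m" by auto
  have "A \<subseteq> Useq C (to_nat_on C A)" using Useq_cover[OF assms(1)] insert by auto
  thus ?case using m Useq_mono[of m "max m (to_nat_on C A)" C] Useq_mono[of "to_nat_on C A" "max m (to_nat_on C A)" C]
    by (intro exI[of _ "max m (to_nat_on C A)"]) auto
qed

lemma inv_insert:
  assumes inv: "invF C" and cC: "countable C" and Yinf: "infinite Y"
    and Yfin: "\<forall>i. finite (Y \<inter> Useq C i)"
    and YP: "\<forall>m. infinite {n. blk n \<inter> (Y \<union> Useq C m) = {}}"
    and YQ: "\<forall>m k. \<exists>N. \<forall>n\<ge>N. k \<le> card (blk n - (Y \<union> Useq C m))"
  shows "invF (insert Y C)"
  unfolding invF_def
proof (intro allI impI)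
  fix F assume F: "finite F \<and> F \<subseteq> insert Y C"
  show "goodF F"
  proof (cases "Y \<in> F")
    case False
    hence "F \<subseteq> C" using F by auto
    thus ?thesis using inv F unfolding invF_def by auto
  next
    case True
    define F' where "F' = F - {Y}"
    have F': "finite F'" "F' \<subseteq> C" using F by (auto simp: F'_def)
    have gF': "goodF F'" using inv F' unfolding invF_def by auto
    obtain m where m: "\<Union>F' \<subseteq> Useq C m" using Useq_cover_fin[OF cC F'] by blast
    have UF: "\<Union>F \<subseteq> Y \<union> Useq C m" using m True unfolding F'_def by auto
    have "\<forall>X\<in>F. infinite X" using gF' Yinf unfolding goodF_def F'_def by auto
    moreover have "\<forall>X\<in>F. \<forall>Z\<in>F. X \<noteq> Z \<longrightarrow> finite (X \<inter> Z)"
    proof (intro ballI impI)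
      fix X Z assume XZ: "X \<in> F" "Z \<in> F" "X \<noteq> Z"
      have fy: "finite (Y \<inter> W)" if "W \<in> F'" for W
      proof -
        have "W \<in> C" using that F' by auto
        hence "W \<subseteq> Useq C (to_nat_on C W)" using Useq_cover[OF cC] by blast
        thus ?thesis using Yfin by (meson finite_subset inf_mono order_refl)
      qed
      show "finite (X \<inter> Z)"
      proof (cases "X = Y \<or> Z = Y")
        case True
        thus ?thesis
        proof
          assume "X = Y" hence "Z \<in> F'" using XZ unfolding F'_def by auto
          thus ?thesis using fy \<open>X = Y\<close> by simp
        next
          assume "Z = Y" hence "X \<in> F'" using XZ unfolding F'_def by auto
          thus ?thesis using fy[of X] \<open>Z = Y\<close> by (simp add: Int_commute)
        qed
      next
        case False
        hence "X \<in> F'" "Z \<in> F'" using XZ unfolding F'_def by auto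
        thus ?thesis using gF' XZ unfolding goodF_def by auto
      qed
    qed
    moreover have "infinite {n. blk n \<inter> \<Union>F = {}}"
    proof -
      have "{n. blk n \<inter> (Y \<union> Useq C m) = {}} \<subseteq> {n. blk n \<inter> \<Union>F = {}}" using UF by blast
      thus ?thesis using YP infinite_super by blast
    qed
    moreover have "\<forall>k. \<exists>N. \<forall>n\<ge>N. k \<le> card (blk n - \<Union>F)"
    proof
      fix k
      obtain N where N: "\<forall>n\<ge>N. k \<le> card (blk n - (Y \<union> Useq C m))" using YQ by blast
      have "card (blk n - (Y \<union> Useq C m)) \<le> card (blk n - \<Union>F)" for n
        by (rule card_mono) (use UF in auto)
      thus "\<exists>N. \<forall>n\<ge>N. k \<le> card (blk n - \<Union>F)" using N le_trans by blast
    qed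
    ultimately show ?thesis unfolding goodF_def by blast
  qed
qed

lemma ext1_ex:
  assumes inv: "invF C" and cC: "countable C" and X: "infinite X" and ad: "\<forall>A\<in>C. finite (X \<inter> A)"
  shows "\<exists>Y\<subseteq>X. infinite Y \<and> invF (insert Y C)"
proof -
  have "infinite (X - Useq C k)" for k
  proof -
    obtain F where F: "finite F" "F \<subseteq> C" "Useq C k = \<Union>F" using Useq_eq[of C k] by blast
    have "X \<inter> \<Union>F = (\<Union>A\<in>F. X \<inter> A)" by blast
    moreover have "finite (\<Union>A\<in>F. X \<inter> A)" using F ad by blast
    ultimately have "finite (X \<inter> \<Union>F)" by simp
    hence "infinite (X - (X \<inter> \<Union>F))" using X by (rule Diff_infinite_finite)
    thus ?thesis using F by (simp add: Diff_Int)
  qed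
  then obtain Y where "Y \<subseteq> X" "infinite Y" "\<forall>i. finite (Y \<inter> Useq C i)"
    "\<forall>m. infinite {n. blk n \<inter> (Y \<union> Useq C m) = {}}"
    "\<forall>m k. \<exists>N. \<forall>n\<ge>N. k \<le> card (blk n - (Y \<union> Useq C m))"
    using E1core[of "Useq C" X, OF Useq_mono Useq_free[OF inv] Useq_grow[OF inv]] by metis
  thus ?thesis using inv_insert[OF inv cC, of Y] by blast
qed

lemma ext2_ex:
  fixes f :: "nat \<Rightarrow> nat"
  assumes inv: "invF C" and cC: "countable C" and fz: "\<forall>A\<in>C. f -` A \<in> Zideal"
  shows "\<exists>A. f -` A \<notin> Zideal \<and> invF (insert A C)"
proof -
  have fU: "f -` Useq C k \<in> Zideal" for k
  proof -
    obtain F where F: "finite F" "F \<subseteq> C" "Useq C k = \<Union>F" using Useq_eq[of C k] by blast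
    have "f -` \<Union>F = (\<Union>A\<in>F. f -` A)" by auto
    moreover have "(\<Union>A\<in>F. f -` A) \<in> Zideal" using F fz by (intro Z_UN) auto
    ultimately show ?thesis using F by simp
  qed
  show ?thesis
  proof (cases "\<forall>G. finite G \<longrightarrow> f -` G \<in> Zideal")
    case True
    then obtain A where "f -` A \<notin> Zideal" "infinite A" "\<forall>i. finite (A \<inter> Useq C i)"
      "\<forall>m. infinite {n. blk n \<inter> (A \<union> Useq C m) = {}}"
      "\<forall>m k. \<exists>N. \<forall>n\<ge>N. k \<le> card (blk n - (A \<union> Useq C m))"
      using E2core[of "Useq C" f, OF Useq_mono Useq_free[OF inv] Useq_grow[OF inv] fU True[rule_format]] by metis
    thus ?thesis using inv_insert[OF inv cC, of A] by blast
  next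
    case False
    then obtain G where G: "finite G" "f -` G \<notin> Zideal" by blast
    have "\<exists>p\<in>G. f -` {p} \<notin> Zideal"
    proof (rule ccontr)
      assume "\<not> (\<exists>p\<in>G. f -` {p} \<notin> Zideal)"
      hence "(\<Union>p\<in>G. f -` {p}) \<in> Zideal" using Z_UN[OF G(1), of "\<lambda>p. f -` {p}"] by blast
      moreover have "(\<Union>p\<in>G. f -` {p}) = f -` G" by auto
      ultimately show False using G by simp
    qed
    then obtain p where p: "f -` {p} \<notin> Zideal" by blast
    have pU: "p \<notin> Useq C k" for k
    proof
      assume "p \<in> Useq C k"
      hence "f -` {p} \<subseteq> f -` Useq C k" by auto
      thus False using Z_mono[OF fU] p by blast
    qed
    have "infinite (UNIV - Useq C k)" for k
    proof -
      have "lo ` {n. blk n \<inter> Useq C k = {}} \<subseteq> UNIV - Useq C k" using lo_in_blk by blast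
      moreover have "infinite (lo ` {n. blk n \<inter> Useq C k = {}})"
        using Useq_free[OF inv, of k] lo_strict
        by (simp add: finite_image_iff strict_mono_imp_inj_on)
      ultimately show ?thesis using infinite_super by blast
    qed
    then obtain Y where Y: "infinite Y" "\<forall>i. finite (Y \<inter> Useq C i)"
      "\<forall>m. infinite {n. blk n \<inter> (Y \<union> Useq C m) = {}}"
      "\<forall>m k. \<exists>N. \<forall>n\<ge>N. k \<le> card (blk n - (Y \<union> Useq C m))"
      using E1core[of "Useq C" UNIV, OF Useq_mono Useq_free[OF inv] Useq_grow[OF inv]] by metis
    define A where "A = insert p Y"
    have "infinite A" using Y by (simp add: A_def)
    moreover have "\<forall>i. finite (A \<inter> Useq C i)" using Y pU by (simp add: A_def)
    moreover have "\<forall>m. infinite {n. blk n \<inter> (A \<union> Useq C m) = {}}"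
    proof
      fix m
      have "{n. blk n \<inter> (Y \<union> Useq C m) = {}} - {n. blk n \<inter> {p} \<noteq> {}} \<subseteq> {n. blk n \<inter> (A \<union> Useq C m) = {}}"
        by (auto simp: A_def)
      moreover have "infinite ({n. blk n \<inter> (Y \<union> Useq C m) = {}} - {n. blk n \<inter> {p} \<noteq> {}})"
        using Y(3) finitely_many_blocks_meet[of "{p}"] by (simp add: Diff_infinite_finite)
      ultimately show "infinite {n. blk n \<inter> (A \<union> Useq C m) = {}}" using infinite_super by blast
    qed
    moreover have "\<forall>m k. \<exists>N. \<forall>n\<ge>N. k \<le> card (blk n - (A \<union> Useq C m))"
    proof (intro allI)
      fix m k
      obtain N where N: "\<forall>n\<ge>N. k \<le> card (blk n - (Y \<union> Useq C m))" using Y(4) by blast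
      have "k \<le> card (blk n - (A \<union> Useq C m))" if "n \<ge> max N (Suc p)" for n
      proof -
        have "p \<notin> blk n" using in_blk_ge[of p n] that by auto
        hence "blk n - (A \<union> Useq C m) = blk n - (Y \<union> Useq C m)" by (auto simp: A_def)
        thus ?thesis using N that by simp
      qed
      thus "\<exists>N. \<forall>n\<ge>N. k \<le> card (blk n - (A \<union> Useq C m))" by blast
    qed
    moreover have "f -` A \<notin> Zideal"
    proof
      assume "f -` A \<in> Zideal"
      moreover have "f -` {p} \<subseteq> f -` A" by (auto simp: A_def)
      ultimately show False using Z_mono p by blast
    qed
    ultimately show ?thesis using inv_insert[OF inv cC, of A] by blast
  qed
qed



definition encode :: "(nat \<Rightarrow> nat) \<times> nat set \<Rightarrow> nat set" where
  "encode p = range (\<lambda>n. 2 * prod_encode (n, fst p n)) \<union> (\<lambda>x. 2*x+1) ` snd p"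

lemma encode_inj: "inj encode"
proof (rule injI)
  fix p q assume eq: "encode p = encode q"
  obtain f X where p: "p = (f, X)" by (cases p)
  obtain g Y where q: "q = (g, Y)" by (cases q)
  have odd: "2*x+1 \<noteq> 2*k" for x k :: nat by presburger
  have "x \<in> X \<longleftrightarrow> x \<in> Y" for x
  proof -
    have "x \<in> X \<longleftrightarrow> 2*x+1 \<in> encode p" unfolding p encode_def using odd by auto
    moreover have "x \<in> Y \<longleftrightarrow> 2*x+1 \<in> encode q" unfolding q encode_def using odd by auto
    ultimately show ?thesis using eq by simp
  qed
  hence XY: "X = Y" by blast
  have "f n = g n" for n
  proof -
    have "2 * prod_encode (n, f n) \<in> encode q" using eq unfolding p encode_def by auto
    then obtain m where "2 * prod_encode (n, f n) = 2 * prod_encode (m, g m)"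
      unfolding q encode_def using odd by (auto simp: eq_commute[of "2 * prod_encode _"])
    hence "prod_encode (n, f n) = prod_encode (m, g m)" by linarith
    hence "(n, f n) = (m, g m)" using prod_encode_eq by blast
    thus ?thesis by (metis Pair_inject)
  qed
  thus "p = q" using XY p q by auto
qed

definition ext1 :: "nat set set \<Rightarrow> nat set \<Rightarrow> nat set set" where
  "ext1 C X = (if (\<exists>A\<in>C. infinite (X \<inter> A)) \<or> finite X then C
     else insert (SOME Y. Y \<subseteq> X \<and> infinite Y \<and> invF (insert Y C)) C)"

definition ext2 :: "nat set set \<Rightarrow> (nat \<Rightarrow> nat) \<Rightarrow> nat set set" where
  "ext2 C f = (if \<exists>A\<in>C. f -` A \<notin> Zideal then C
     else insert (SOME A. f -` A \<notin> Zideal \<and> invF (insert A C)) C)"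

definition step :: "nat set set \<Rightarrow> nat set \<Rightarrow> nat set set" where
  "step C t = ext2 (ext1 C (snd (inv encode t))) (fst (inv encode t))"

lemma ext1_props:
  assumes "invF C" "countable C"
  shows "invF (ext1 C X) \<and> countable (ext1 C X) \<and> C \<subseteq> ext1 C X \<and> (infinite X \<longrightarrow> (\<exists>A\<in>ext1 C X. infinite (X \<inter> A)))"
proof (cases "(\<exists>A\<in>C. infinite (X \<inter> A)) \<or> finite X")
  case True thus ?thesis using assms by (auto simp: ext1_def)
next
  case False
  hence "infinite X" "\<forall>A\<in>C. finite (X \<inter> A)" by auto
  hence ex: "\<exists>Y. Y \<subseteq> X \<and> infinite Y \<and> invF (insert Y C)" using ext1_ex[OF assms] by blast
  define Y where "Y = (SOME Y. Y \<subseteq> X \<and> infinite Y \<and> invF (insert Y C))"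
  have Y: "Y \<subseteq> X \<and> infinite Y \<and> invF (insert Y C)" unfolding Y_def by (rule someI_ex[OF ex])
  have e: "ext1 C X = insert Y C" using False by (simp add: ext1_def Y_def)
  have "infinite (X \<inter> Y)" using Y by (simp add: Int_absorb1)
  thus ?thesis using Y assms e by auto
qed

lemma ext2_props:
  assumes "invF C" "countable C"
  shows "invF (ext2 C f) \<and> countable (ext2 C f) \<and> C \<subseteq> ext2 C f \<and> (\<exists>A\<in>ext2 C f. f -` A \<notin> Zideal)"
proof (cases "\<exists>A\<in>C. f -` A \<notin> Zideal")
  case True thus ?thesis using assms by (auto simp: ext2_def)
next
  case False
  hence ex: "\<exists>A. f -` A \<notin> Zideal \<and> invF (insert A C)" using ext2_ex[OF assms] by blast
  define A where "A = (SOME A. f -` A \<notin> Zideal \<and> invF (insert A C))"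
  have A: "f -` A \<notin> Zideal \<and> invF (insert A C)" unfolding A_def by (rule someI_ex[OF ex])
  have e: "ext2 C f = insert A C" using False by (simp add: ext2_def A_def)
  thus ?thesis using A assms e by auto
qed

lemma step_props:
  assumes "invF C" "countable C"
  shows "invF (step C t) \<and> countable (step C t) \<and> C \<subseteq> step C t"
  using ext1_props[OF assms] ext2_props ext1_props unfolding step_def by (meson order_trans)

lemma step_cover:
  assumes "invF C" "countable C" "infinite X"
  shows "\<exists>A\<in>step C (encode (f, X)). infinite (X \<inter> A)"
proof -
  have "inv encode (encode (f, X)) = (f, X)" using encode_inj by simp
  hence e: "step C (encode (f, X)) = ext2 (ext1 C X) f" unfolding step_def by simp
  from ext1_props[OF assms(1,2), of X] assms(3) obtain A where "A \<in> ext1 C X" "infinite (X \<inter> A)" by blast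
  moreover have "ext1 C X \<subseteq> ext2 (ext1 C X) f" using ext1_props[OF assms(1,2), of X] ext2_props by blast
  ultimately show ?thesis using e by auto
qed

lemma step_kat:
  assumes "invF C" "countable C"
  shows "\<exists>A\<in>step C (encode (f, {})). f -` A \<notin> Zideal"
proof -
  have "inv encode (encode (f, {})) = (f, {})" using encode_inj by simp
  hence e: "step C (encode (f, {})) = ext2 (ext1 C {}) f" unfolding step_def by simp
  show ?thesis using e ext1_props[OF assms, of "{}"] ext2_props by metis
qed

lemma CH_order:
  assumes ch: CH
  shows "\<exists>R :: (nat set \<times> nat set) set. wf R \<and> (\<forall>a b. a \<noteq> b \<longrightarrow> (a,b)\<in>R \<or> (b,a)\<in>R) \<and> (\<forall>b. countable {a. (a,b)\<in>R})"
proof -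
  obtain r :: "nat set rel" where wo: "well_order_on UNIV r" using well_order_on by blast
  define s where "s = r - Id"
  have wfs: "wf s" using wo unfolding s_def well_order_on_def by blast
  have tot: "\<forall>a b. a \<noteq> b \<longrightarrow> (a,b)\<in>s \<or> (b,a)\<in>s"
    using wo unfolding s_def well_order_on_def linear_order_on_def total_on_def by blast
  show ?thesis
  proof (cases "\<forall>t. countable {a. (a,t)\<in>s}")
    case True thus ?thesis using wfs tot by blast
  next
    case False
    then obtain t where "t \<in> {t. \<not> countable {a. (a,t)\<in>s}}" by blast
    then obtain t0 where t0: "t0 \<in> {t. \<not> countable {a. (a,t)\<in>s}}"
      and mn: "\<And>y. (y, t0) \<in> s \<Longrightarrow> y \<notin> {t. \<not> countable {a. (a,t)\<in>s}}"
      using wfE_min[OF wfs] by metis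
    define S where "S = {a. (a,t0)\<in>s}"
    have Sunc: "\<not> countable S" using t0 S_def by simp
    have Sseg: "y \<in> S \<Longrightarrow> countable {a. (a,y)\<in>s}" for y using mn unfolding S_def by blast
    have "S \<approx> (UNIV :: nat set set)" using ch Sunc unfolding CH_def by blast
    then obtain \<phi> where "bij_betw \<phi> S (UNIV :: nat set set)" unfolding eqpoll_def by blast
    hence be: "bij_betw (inv_into S \<phi>) UNIV S" by (rule bij_betw_inv_into)
    define e where "e = inv_into S \<phi>"
    have einj: "inj e" and eS: "\<And>x. e x \<in> S" using be unfolding e_def bij_betw_def by auto
    define R where "R = inv_image s e"
    have "wf R" unfolding R_def using wfs by (rule wf_inv_image)
    moreover have "\<forall>a b. a \<noteq> b \<longrightarrow> (a,b)\<in>R \<or> (b,a)\<in>R"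
    proof (intro allI impI)
      fix a b :: "nat set" assume "a \<noteq> b"
      hence "e a \<noteq> e b" using einj by (auto dest: injD)
      thus "(a,b)\<in>R \<or> (b,a)\<in>R" using tot unfolding R_def inv_image_def by blast
    qed
    moreover have "\<forall>b. countable {a. (a,b)\<in>R}"
    proof
      fix b
      have "e ` {a. (a,b)\<in>R} \<subseteq> {z. (z, e b)\<in>s}" unfolding R_def by auto
      hence "countable (e ` {a. (a,b)\<in>R})" using Sseg[OF eS[of b]] countable_subset by blast
      thus "countable {a. (a,b)\<in>R}" using einj by (meson countable_image_inj_on inj_on_subset subset_UNIV)
    qed
    ultimately show ?thesis by blast
  qed
qed



lemma step_sup: "C \<subseteq> step C t"
  unfolding step_def ext1_def ext2_def by auto

lemma inf_elem: "infinite S \<Longrightarrow> \<exists>x. x \<in> S"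
  using infinite_imp_nonempty by blast

theorem mainTheorem17:
  assumes "CH"
  shows "\<exists>\<A>. MAD \<A> \<and> \<not> katetov_le (gen_ideal \<A>) Zideal \<and> \<not> SS_block \<A>"
proof -
  obtain R :: "(nat set \<times> nat set) set" where wfR: "wf R"
    and tot: "\<forall>a b. a \<noteq> b \<longrightarrow> (a,b)\<in>R \<or> (b,a)\<in>R" and cnt: "\<forall>b. countable {a. (a,b)\<in>R}"
    using CH_order[OF assms] by blast
  define H where "H = (\<lambda>G t. step (\<Union>y\<in>{y. (y,t)\<in>R}. G y) t)"
  define G where "G = wfrec R H"
  have Geq: "G t = step (\<Union>y\<in>{y. (y,t)\<in>R}. G y) t" for t
  proof -
    have "G t = H (cut G R t) t" unfolding G_def by (rule wfrec[OF wfR])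
    also have "\<dots> = step (\<Union>y\<in>{y. (y,t)\<in>R}. G y) t"
      unfolding H_def by (simp add: cut_apply)
    finally show ?thesis .
  qed
  have mono: "(y,z)\<in>R \<Longrightarrow> G y \<subseteq> G z" for y z
    using Geq[of z] step_sup[of "\<Union>y\<in>{y. (y,z)\<in>R}. G y" z] by blast
  have cmp: "\<forall>x\<in>S. \<forall>y\<in>S. G x \<subseteq> G y \<or> G y \<subseteq> G x" for S
  proof (intro ballI)
    fix x y assume "x \<in> S" "y \<in> S"
    show "G x \<subseteq> G y \<or> G y \<subseteq> G x"
    proof (cases "x = y")
      case True thus ?thesis by simp
    next
      case False
      hence "(x,y)\<in>R \<or> (y,x)\<in>R" using tot by blast
      thus ?thesis using mono by blast
    qed
  qed
  have Cprops: "invF (\<Union>y\<in>{y. (y,t)\<in>R}. G y) \<and> countable (\<Union>y\<in>{y. (y,t)\<in>R}. G y)"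
    if "\<forall>y. (y,t)\<in>R \<longrightarrow> invF (G y) \<and> countable (G y)" for t
  proof
    show "invF (\<Union>y\<in>{y. (y,t)\<in>R}. G y)" using that by (intro invF_chain cmp) auto
    show "countable (\<Union>y\<in>{y. (y,t)\<in>R}. G y)" using that cnt by (intro countable_UN) auto
  qed
  have ind: "invF (G t) \<and> countable (G t)" for t
    using wfR
  proof (induction t rule: wf_induct_rule)
    case (less t)
    hence "invF (\<Union>y\<in>{y. (y,t)\<in>R}. G y) \<and> countable (\<Union>y\<in>{y. (y,t)\<in>R}. G y)"
      using Cprops by blast
    thus ?case using step_props Geq[of t] by metis
  qed
  have Ct: "invF (\<Union>y\<in>{y. (y,t)\<in>R}. G y) \<and> countable (\<Union>y\<in>{y. (y,t)\<in>R}. G y)" for t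
    using ind by (intro Cprops) blast
  define \<A> where "\<A> = (\<Union>t\<in>UNIV. G t)"
  have invA: "invF \<A>" unfolding \<A>_def using ind by (intro invF_chain cmp) auto
  have ad: "almost_disjoint_family \<A>" using invF_AD[OF invA] .
  have cover: "\<exists>A\<in>\<A>. infinite (X \<inter> A)" if Xinf: "infinite X" for X
  proof -
    obtain A where "A \<in> step (\<Union>y\<in>{y. (y, encode (id, X))\<in>R}. G y) (encode (id, X))" "infinite (X \<inter> A)"
      using step_cover[OF Ct[of "encode (id, X)", THEN conjunct1] Ct[of "encode (id, X)", THEN conjunct2] Xinf, of id] by blast
    thus ?thesis using Geq[of "encode (id, X)"] unfolding \<A>_def by auto
  qed
  have kat: "\<exists>A\<in>\<A>. f -` A \<notin> Zideal" for f
  proof -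
    obtain A where "A \<in> step (\<Union>y\<in>{y. (y, encode (f, {}))\<in>R}. G y) (encode (f, {}))" "f -` A \<notin> Zideal"
      using step_kat[OF Ct[of "encode (f, {})", THEN conjunct1] Ct[of "encode (f, {})", THEN conjunct2], of f] by blast
    thus ?thesis using Geq[of "encode (f, {})"] unfolding \<A>_def by auto
  qed
  have MAD: "MAD \<A>"
    unfolding MAD_def
  proof (intro conjI ad allI impI)
    fix \<B> assume B: "almost_disjoint_family \<B> \<and> \<A> \<subseteq> \<B>"
    show "\<B> = \<A>"
    proof
      show "\<B> \<subseteq> \<A>"
      proof
        fix X assume X: "X \<in> \<B>"
        hence "infinite X" using B unfolding almost_disjoint_family_def by blast
        then obtain A where A: "A \<in> \<A>" "infinite (X \<inter> A)" using cover by blast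
        hence "A \<in> \<B>" using B by blast
        hence "X = A" using A X B unfolding almost_disjoint_family_def by blast
        thus "X \<in> \<A>" using A by simp
      qed
    qed (use B in blast)
  qed
  have notK: "\<not> katetov_le (gen_ideal \<A>) Zideal"
    unfolding katetov_le_def
  proof
    assume "\<exists>f. \<forall>A\<in>gen_ideal \<A>. f -` A \<in> Zideal"
    then obtain f where f: "\<forall>A\<in>gen_ideal \<A>. f -` A \<in> Zideal" by blast
    obtain A where A: "A \<in> \<A>" "f -` A \<notin> Zideal" using kat by blast
    have "A \<in> gen_ideal \<A>" unfolding gen_ideal_def using A by (intro CollectI exI[of _ "{A}"]) auto
    thus False using f A by blast
  qed
  have bs: "block_sequence blk"
    unfolding block_sequence_def
  proof (intro conjI allI)
    fix n
    show "finite (blk n)" by simp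
    show "blk n \<noteq> {}" by (rule blk_ne)
    have "Max (blk n) \<in> blk n" using blk_ne[of n] by (intro Max_in) auto
    hence "Max (blk n) < lo (Suc n)" unfolding blk_def by auto
    moreover have "Min (blk (Suc n)) \<in> blk (Suc n)" using blk_ne[of "Suc n"] by (intro Min_in) auto
    hence "lo (Suc n) \<le> Min (blk (Suc n))" unfolding blk_def by auto
    ultimately show "Max (blk n) < Min (blk (Suc n))" by simp
  qed
  have fp: "fin_positive (gen_ideal \<A>) (range blk)"
    unfolding fin_positive_def
  proof (rule conjI)
    show "\<forall>s\<in>range blk. finite s \<and> s \<noteq> {}" using blk_ne by auto
  next
    show "\<forall>X\<in>gen_ideal \<A>. \<exists>s\<in>range blk. X \<inter> s = {}"
    proof
    fix X assume "X \<in> gen_ideal \<A>"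
    then obtain F where F: "finite F" "F \<subseteq> \<A>" "finite (X - \<Union>F)" unfolding gen_ideal_def by blast
    have "goodF F" using invA F unfolding invF_def by blast
    hence i: "infinite {n. blk n \<inter> \<Union>F = {}}" unfolding goodF_def by blast
    have "finite {n. blk n \<inter> (X - \<Union>F) \<noteq> {}}" by (rule finitely_many_blocks_meet[OF F(3)])
    hence "infinite ({n. blk n \<inter> \<Union>F = {}} - {n. blk n \<inter> (X - \<Union>F) \<noteq> {}})"
      using i by (rule Diff_infinite_finite)
    hence "\<exists>n. n \<in> {n. blk n \<inter> \<Union>F = {}} - {n. blk n \<inter> (X - \<Union>F) \<noteq> {}}"
      by (rule inf_elem)
    then obtain n where "n \<in> {n. blk n \<inter> \<Union>F = {}} - {n. blk n \<inter> (X - \<Union>F) \<noteq> {}}" ..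
    hence "X \<inter> blk n = {}" by blast
    thus "\<exists>s\<in>range blk. X \<inter> s = {}" by blast
    qed
  qed
  have noW: "\<not> (\<exists>W. infinite W \<and> (\<Union>n\<in>W. blk n) \<in> gen_ideal \<A>)"
  proof
    assume "\<exists>W. infinite W \<and> (\<Union>n\<in>W. blk n) \<in> gen_ideal \<A>"
    then obtain W where W: "infinite W" "(\<Union>n\<in>W. blk n) \<in> gen_ideal \<A>" by blast
    then obtain F where F: "finite F" "F \<subseteq> \<A>" "finite ((\<Union>n\<in>W. blk n) - \<Union>F)" unfolding gen_ideal_def by blast
    define Gs where "Gs = (\<Union>n\<in>W. blk n) - \<Union>F"
    have "goodF F" using invA F unfolding invF_def by blast
    then obtain N where N: "\<forall>n\<ge>N. 1 \<le> card (blk n - \<Union>F)" unfolding goodF_def by blast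
    have "finite ({..<N} \<union> {n. blk n \<inter> Gs \<noteq> {}})"
      using finitely_many_blocks_meet[of Gs] F(3) unfolding Gs_def by simp
    hence "infinite (W - ({..<N} \<union> {n. blk n \<inter> Gs \<noteq> {}}))" using W(1) by (rule Diff_infinite_finite)
    hence "\<exists>n. n \<in> W - ({..<N} \<union> {n. blk n \<inter> Gs \<noteq> {}})" by (rule inf_elem)
    then obtain n where n0: "n \<in> W - ({..<N} \<union> {n. blk n \<inter> Gs \<noteq> {}})" ..
    hence n: "n \<in> W" "n \<ge> N" "blk n \<inter> Gs = {}" by auto
    have "1 \<le> card (blk n - \<Union>F)" using N n(2) by blast
    hence "blk n - \<Union>F \<noteq> {}" by (cases "blk n - \<Union>F = {}") auto
    then obtain x where x: "x \<in> blk n" "x \<notin> \<Union>F" by blast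
    hence "x \<in> Gs" using n(1) unfolding Gs_def by blast
    thus False using n(3) x(1) by blast
  qed
  have "\<not> SS_block \<A>" unfolding SS_block_def using bs fp noW by blast
  thus ?thesis using MAD notK by blast
qed


end
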